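(* Let $G=(V,E)$ be a graph with at least one edge and let $uv\in E$. Set $l_{uv}=|N(u)\cup N(v)|$, $m_u=|N[u]|$, $m_v=|N[v]|$. Then $$\frac{1}{2^{l_{uv}-2}+2^{l_{uv}-m_u}+2^{l_{uv}-m_v}+1}\le\frac{\sigma_0\big(G-(N[v]\cup N[u])\big)}{\sigma_0(G)}\le 1-\frac{\sigma_0(G-v)}{\sigma_0(G)}.$$ In particular, $$\frac{\sigma_0\big(G-(N[v]\cup N[u])\big)}{\sigma_0(G)}\ge\frac{1}{3\cdot 2^{l_{uv}-2}+1}.$$
   Context: All graphs are finite and simple. $\sigma_0(G)$ denotes the number of independent vertex sets of $G$ (including the empty set). $N(v)$ is the set of neighbours of $v$ and $N[v]=N(v)\cup\{v\}$. For $S\subseteq V$, $G-S$ is the subgraph induced by $V\setminus S$, and $G-v=G-\{v\}$; the graph with no vertices has $\sigma_0=1$. *)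

theory Defs
  imports Complex_Main
begin

definition simple_graph :: "'a set \<Rightarrow> ('a \<Rightarrow> 'a \<Rightarrow> bool) \<Rightarrow> bool" where
  "simple_graph V E \<longleftrightarrow> finite V \<and> (\<forall>x y. E x y \<longrightarrow> E y x)
     \<and> (\<forall>x. \<not> E x x) \<and> (\<forall>x y. E x y \<longrightarrow> x \<in> V \<and> y \<in> V)"

definition open_nbhd :: "'a set \<Rightarrow> ('a \<Rightarrow> 'a \<Rightarrow> bool) \<Rightarrow> 'a \<Rightarrow> 'a set" where
  "open_nbhd V E v = {w \<in> V. E v w}"

definition closed_nbhd :: "'a set \<Rightarrow> ('a \<Rightarrow> 'a \<Rightarrow> bool) \<Rightarrow> 'a \<Rightarrow> 'a set" where
  "closed_nbhd V E v = insert v (open_nbhd V E v)"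

definition independent :: "('a \<Rightarrow> 'a \<Rightarrow> bool) \<Rightarrow> 'a set \<Rightarrow> bool" where
  "independent E I \<longleftrightarrow> (\<forall>x\<in>I. \<forall>y\<in>I. \<not> E x y)"

text \<open>The induced subgraph G - S is represented by vertex set V - S with the same E.\<close>

definition sigma0 :: "'a set \<Rightarrow> ('a \<Rightarrow> 'a \<Rightarrow> bool) \<Rightarrow> nat" where
  "sigma0 V E = card {I. I \<subseteq> V \<and> independent E I}"

end

theory Submission
  imports Defs
begin

lemma sigma_fin: "finite V \<Longrightarrow> finite {I. I \<subseteq> V \<and> independent E I}"
  by (rule finite_subset[of _ "Pow V"]) auto

lemma sigma_pos: "finite V \<Longrightarrow> sigma0 V E > 0"
  unfolding sigma0_def
  by (metis (mono_tags, lifting) card_gt_0_iff empty_iff empty_subsetI independent_def mem_Collect_eq sigma_fin)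

lemma split_bound:
  assumes fin: "finite V" and SV: "S \<subseteq> V"
  shows "sigma0 V E \<le> card {J. J \<subseteq> S \<and> independent E J} * sigma0 (V - S) E"
proof -
  let ?A = "{J. J \<subseteq> S \<and> independent E J}"
  let ?B = "{J. J \<subseteq> V - S \<and> independent E J}"
  have "card {I. I \<subseteq> V \<and> independent E I} \<le> card (?A \<times> ?B)"
  proof (rule card_inj_on_le[where f="\<lambda>I. (I \<inter> S, I - S)"])
    show "inj_on (\<lambda>I. (I \<inter> S, I - S)) {I. I \<subseteq> V \<and> independent E I}"
      by (rule inj_onI) auto
    show "(\<lambda>I. (I \<inter> S, I - S)) ` {I. I \<subseteq> V \<and> independent E I} \<subseteq> ?A \<times> ?B"
      by (auto simp: independent_def)
    show "finite (?A \<times> ?B)"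
      using fin SV by (intro finite_cartesian_product sigma_fin) (auto intro: finite_subset)
  qed
  then show ?thesis unfolding sigma0_def card_cartesian_product .
qed

lemma lower_part:
  assumes sg: "simple_graph V E" and "E v w" and v: "v \<notin> W" and WV: "W \<subseteq> V - {v}"
    and noadj: "\<And>x. x \<in> W \<Longrightarrow> \<not> E v x"
  shows "sigma0 (V - {v}) E + sigma0 W E \<le> sigma0 V E"
proof -
  have fin: "finite V" using sg by (simp add: simple_graph_def)
  have sym: "\<And>x y. E x y \<Longrightarrow> E y x" and irr: "\<And>x. \<not> E x x" using sg by (auto simp: simple_graph_def)
  let ?P = "{I. I \<subseteq> V - {v} \<and> independent E I}"
  let ?Q = "{I. I \<subseteq> W \<and> independent E I}"
  have finQ: "finite ?Q" using fin WV by (intro sigma_fin) (auto intro: finite_subset)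
  have finP: "finite ?P" using fin by (intro sigma_fin) auto
  have inj: "inj_on (insert v) ?Q" using v by (auto simp: inj_on_def)
  have "card ?P + card (insert v ` ?Q) = card (?P \<union> insert v ` ?Q)"
    by (rule card_Un_disjoint[symmetric]) (use finP finQ in auto)
  also have "\<dots> \<le> card {I. I \<subseteq> V \<and> independent E I}"
  proof (rule card_mono)
    show "finite {I. I \<subseteq> V \<and> independent E I}" using fin by (rule sigma_fin)
    show "?P \<union> insert v ` ?Q \<subseteq> {I. I \<subseteq> V \<and> independent E I}"
    proof
      fix I assume "I \<in> ?P \<union> insert v ` ?Q"
      then show "I \<in> {I. I \<subseteq> V \<and> independent E I}"
      proof
        assume "I \<in> ?P" then show ?thesis by auto
      next
        assume "I \<in> insert v ` ?Q"
        then obtain J where J: "J \<subseteq> W" "independent E J" "I = insert v J" by auto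
        have "v \<in> V" using sg assms(2) by (auto simp: simple_graph_def)
        moreover have "independent E I" unfolding J(3) independent_def
        proof (intro ballI)
          fix x y assume x: "x \<in> insert v J" and y: "y \<in> insert v J"
          show "\<not> E x y"
          proof
            assume e: "E x y"
            show False
            proof (cases "x = v")
              case True
              then show False using e y irr noadj J(1) by auto
            next
              case False
              then have xJ: "x \<in> J" using x by auto
              show False
              proof (cases "y = v")
                case True
                then show False using e xJ sym noadj J(1) by blast
              next
                case False
                then show False using e xJ y J(2) unfolding independent_def by auto
              qed
            qed
          qed
        qed
        ultimately show ?thesis using J WV by auto
      qed
    qed
  qed
  finally show ?thesis unfolding sigma0_def using card_image[OF inj] by simp
qed

theorem mainTheorem14:
  fixes V :: "'a set" and E :: "'a \<Rightarrow> 'a \<Rightarrow> bool" and u v :: 'a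
  assumes "simple_graph V E"
    and "E u v"
  defines "l \<equiv> card (open_nbhd V E u \<union> open_nbhd V E v)"
    and "mu \<equiv> card (closed_nbhd V E u)"
    and "mv \<equiv> card (closed_nbhd V E v)"
  shows "1 / ((2::real) powi (int l - 2) + 2 powi (int l - int mu) + 2 powi (int l - int mv) + 1)
           \<le> real (sigma0 (V - (closed_nbhd V E v \<union> closed_nbhd V E u)) E) / real (sigma0 V E)
    \<and> real (sigma0 (V - (closed_nbhd V E v \<union> closed_nbhd V E u)) E) / real (sigma0 V E)
           \<le> 1 - real (sigma0 (V - {v}) E) / real (sigma0 V E)
    \<and> real (sigma0 (V - (closed_nbhd V E v \<union> closed_nbhd V E u)) E) / real (sigma0 V E)
           \<ge> 1 / (3 * (2::real) powi (int l - 2) + 1)"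
proof -
  have fin: "finite V" and sym: "\<And>x y. E x y \<Longrightarrow> E y x" and irr: "\<And>x. \<not> E x x"
    and inV: "\<And>x y. E x y \<Longrightarrow> x \<in> V \<and> y \<in> V"
    using assms(1) by (auto simp: simple_graph_def)
  define S where "S = open_nbhd V E u \<union> open_nbhd V E v"
  have uV: "u \<in> V" and vV: "v \<in> V" using inV assms(2) by auto
  have uv: "u \<noteq> v" using irr assms(2) by auto
  have SV: "S \<subseteq> V" by (auto simp: S_def open_nbhd_def)
  have finS: "finite S" using fin SV by (rule finite_subset[rotated])
  have CS: "closed_nbhd V E v \<union> closed_nbhd V E u = S"
    using uV vV assms(2) sym by (auto simp: S_def closed_nbhd_def open_nbhd_def)
  have uS: "u \<in> S" and vS: "v \<in> S" using uV vV assms(2) sym by (auto simp: S_def open_nbhd_def)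
  have cuS: "closed_nbhd V E u \<subseteq> S" and cvS: "closed_nbhd V E v \<subseteq> S" using CS by auto
  have lS: "l = card S" by (simp add: l_def S_def)
  have l2: "l \<ge> 2" using lS finS uS vS uv
    by (metis card_2_iff empty_subsetI insert_subset card_mono)
  have mu2: "mu \<ge> 2"
  proof -
    have "{u, v} \<subseteq> closed_nbhd V E u" using vV assms(2) by (auto simp: closed_nbhd_def open_nbhd_def)
    moreover have "finite (closed_nbhd V E u)" using finS cuS finite_subset by blast
    ultimately show ?thesis unfolding mu_def using uv by (metis card_2_iff card_mono)
  qed
  have mv2: "mv \<ge> 2"
  proof -
    have "{u, v} \<subseteq> closed_nbhd V E v" using uV assms(2) sym by (auto simp: closed_nbhd_def open_nbhd_def)
    moreover have "finite (closed_nbhd V E v)" using finS cvS finite_subset by blast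
    ultimately show ?thesis unfolding mv_def using uv by (metis card_2_iff card_mono)
  qed
  have mul: "mu \<le> l" unfolding mu_def lS using finS cuS by (rule card_mono)
  have mvl: "mv \<le> l" unfolding mv_def lS using finS cvS by (rule card_mono)
  let ?A = "{J. J \<subseteq> S \<and> independent E J}"
  have Asub: "?A \<subseteq> Pow (S - {u, v}) \<union> insert u ` Pow (S - closed_nbhd V E u) \<union> insert v ` Pow (S - closed_nbhd V E v)"
  proof
    fix J assume J: "J \<in> ?A"
    show "J \<in> Pow (S - {u, v}) \<union> insert u ` Pow (S - closed_nbhd V E u) \<union> insert v ` Pow (S - closed_nbhd V E v)"
    proof (cases "u \<in> J")
      case True
      have "J - {u} \<subseteq> S - closed_nbhd V E u"
        using J True by (auto simp: independent_def closed_nbhd_def open_nbhd_def)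
      moreover have "J = insert u (J - {u})" using True by auto
      ultimately show ?thesis by blast
    next
      case False
      show ?thesis
      proof (cases "v \<in> J")
        case True
        have "J - {v} \<subseteq> S - closed_nbhd V E v"
          using J True by (auto simp: independent_def closed_nbhd_def open_nbhd_def)
        moreover have "J = insert v (J - {v})" using True by auto
        ultimately show ?thesis by blast
      next
        case False2: False
        then show ?thesis using J False by auto
      qed
    qed
  qed
  have cardA: "card ?A \<le> 2^(l-2) + 2^(l-mu) + 2^(l-mv)"
  proof -
    have "card ?A \<le> card (Pow (S - {u, v}) \<union> insert u ` Pow (S - closed_nbhd V E u) \<union> insert v ` Pow (S - closed_nbhd V E v))"
      using Asub finS by (intro card_mono) auto
    also have "\<dots> \<le> card (Pow (S - {u, v})) + card (insert u ` Pow (S - closed_nbhd V E u)) + card (insert v ` Pow (S - closed_nbhd V E v))"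
      by (meson add_mono card_Un_le le_refl order_trans)
    also have "\<dots> \<le> card (Pow (S - {u, v})) + card (Pow (S - closed_nbhd V E u)) + card (Pow (S - closed_nbhd V E v))"
      by (intro add_mono card_image_le) (use finS in auto)
    also have "\<dots> = 2^(l-2) + 2^(l-mu) + 2^(l-mv)"
      using finS uS vS uv cuS cvS
      by (simp add: card_Pow card_Diff_subset lS mu_def mv_def finite_subset)
    finally show ?thesis .
  qed
  define s where "s = sigma0 V E"
  define w where "w = sigma0 (V - S) E"
  define t where "t = sigma0 (V - {v}) E"
  have spos: "s > 0" unfolding s_def using fin by (rule sigma_pos)
  have sle: "s \<le> (2^(l-2) + 2^(l-mu) + 2^(l-mv)) * w"
    unfolding s_def w_def using split_bound[OF fin SV, of E] cardA
    by (meson le_trans mult_le_mono1)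
  have tw: "t + w \<le> s" unfolding s_def w_def t_def
    by (rule lower_part[OF assms(1) sym[OF assms(2)]]) (use vS in \<open>auto simp: open_nbhd_def S_def\<close>)
  have p1: "(2::real) powi (int l - 2) = 2^(l-2)" using l2
    by (metis of_nat_diff of_nat_numeral power_int_of_nat)
  have p2: "(2::real) powi (int l - int mu) = 2^(l-mu)" using mul
    by (metis of_nat_diff power_int_of_nat)
  have p3: "(2::real) powi (int l - int mv) = 2^(l-mv)" using mvl
    by (metis of_nat_diff power_int_of_nat)
  have q2: "(2::real)^(l-mu) \<le> 2^(l-2)" using mu2 by (intro power_increasing) auto
  have q3: "(2::real)^(l-mv) \<le> 2^(l-2)" using mv2 by (intro power_increasing) auto
  define D where "D = (2::real)^(l-2) + 2^(l-mu) + 2^(l-mv)"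
  have Dpos: "D > 0" unfolding D_def
    using zero_less_power[of "2::real" "l-2"] zero_le_power[of "2::real" "l-mu"] zero_le_power[of "2::real" "l-mv"] by linarith
  have "real s \<le> real ((2^(l-2) + 2^(l-mu) + 2^(l-mv)) * w)" using sle by (simp only: of_nat_le_iff)
  then have sleR: "real s \<le> D * real w" unfolding D_def by simp
  have sR: "real s > 0" using spos by simp
  have r1: "1 / (D + 1) \<le> real w / real s"
  proof -
    have "D * real w \<le> (D + 1) * real w" by (simp add: distrib_right)
    then have "real s \<le> (D + 1) * real w" using sleR by linarith
    then show ?thesis using sR Dpos by (simp add: divide_simps mult.commute)
  qed
  have r2: "real w / real s \<le> 1 - real t / real s"
    using tw sR by (simp add: divide_simps)
  have r3: "1 / (3 * (2::real)^(l-2) + 1) \<le> real w / real s"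
  proof -
    have "D \<le> 3 * 2^(l-2)" unfolding D_def using q2 q3 by linarith
    then have "1 / (3 * (2::real)^(l-2) + 1) \<le> 1 / (D + 1)" using Dpos
      by (intro divide_left_mono) auto
    then show ?thesis using r1 by linarith
  qed
  show ?thesis using r1 r2 r3 unfolding p1 p2 p3 D_def w_def s_def t_def CS by simp
qed

end
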